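(* Let $I,S\ge 0$ and $j\ge 2$ be integers with $I>S$, $I+S$ odd and $j=\frac{I-S-1}{2}$, and consider the pairing process described in the context. For $1\le h\le I$, let $N_\dagger(I,S,h)$ be the number of distinct sets of bb-pairings that arise as the set of bb-pairings of a possible wiring in which $b_h$ is left unpaired. Then: $N_\dagger(I,S,I)=\frac{1}{j!}\prod_{k=0}^{j-1}\binom{I-1-2k}{2}$; $N_\dagger(I,S,I-1)=\frac{1}{(j-1)!}(I-2)\prod_{k=0}^{j-2}\binom{I-3-2k}{2}$; for $S+1\le h\le I-2$: $N_\dagger(I,S,h)=0$ if $j<I-h$, $N_\dagger(I,S,h)=\frac{1}{(j-I+h)!}\prod_{t=1}^{I-h}(h-t)$ if $j=I-h$, and $N_\dagger(I,S,h)=\frac{1}{(j-I+h)!}\prod_{t=1}^{I-h}(h-t)\prod_{t=1}^{j-I+h}\binom{2h-I-1-2(t-1)}{2}$ if $j>I-h$; and $N_\dagger(I,S,h)=0$ for $h\le S$.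
   Context: Pairing process: there are $I$ infected devices $b_1,\dots,b_I$ and $S$ clean devices $w_1,\dots,w_S$. For $t=1,\dots,I$ in this order: if $b_t$ is not yet paired and at least one device other than $b_t$ is not yet paired, then $b_t$ chooses one of the currently unpaired devices other than itself uniformly at random, independently of previous choices, and becomes paired with it; otherwise $b_t$ does nothing. Each device belongs to at most one pair. The wiring is the final set of pairs; a bb-pairing is a pair consisting of two infected devices; a wiring is possible if it occurs with positive probability. Under the hypotheses, every possible wiring with exactly $j$ bb-pairings leaves exactly one infected device unpaired. *)

theory Defs
  imports Complex_Main
begin

text \<open>Devices: infected device b_i is Inl i (1 <= i <= I), clean device w_k is Inr k (1 <= k <= S).
A pair is a two-element set of devices; a wiring is a set of pairs.\<close>

type_synonym device = "nat + nat"

definition devices :: "nat \<Rightarrow> nat \<Rightarrow> device set" where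
  "devices I S = Inl ` {1..I} \<union> Inr ` {1..S}"

definition unpaired :: "nat \<Rightarrow> nat \<Rightarrow> device set set \<Rightarrow> device set" where
  "unpaired I S M = devices I S - \<Union>M"

text \<open>Set of partial wirings reachable with positive probability after the first t steps
(each uniform choice among finitely many options has positive probability, so the
positive-probability outcomes are exactly those produced by some sequence of admissible choices).\<close>
primrec reachable :: "nat \<Rightarrow> nat \<Rightarrow> nat \<Rightarrow> device set set set" where
  "reachable I S 0 = {{}}"
| "reachable I S (Suc t) =
     {M'. \<exists>M \<in> reachable I S t.
        (if Inl (Suc t) \<in> unpaired I S M \<and> unpaired I S M - {Inl (Suc t)} \<noteq> {}
         then (\<exists>d \<in> unpaired I S M - {Inl (Suc t)}. M' = insert {Inl (Suc t), d} M)
         else M' = M)}"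

definition possible_wirings :: "nat \<Rightarrow> nat \<Rightarrow> device set set set" where
  "possible_wirings I S = reachable I S I"

definition bb_pairings :: "device set set \<Rightarrow> device set set" where
  "bb_pairings M = {p \<in> M. p \<subseteq> range Inl}"

definition N_dagger :: "nat \<Rightarrow> nat \<Rightarrow> nat \<Rightarrow> nat" where
  "N_dagger I S h = card {bb_pairings M | M. M \<in> possible_wirings I S \<and> Inl h \<notin> \<Union>M}"

end

theory Submission
  imports Defs "HOL-Library.FuncSet"
begin


definition pairs_in :: "'a set \<Rightarrow> 'a set set" where
  "pairs_in L = {p. p \<subseteq> L \<and> card p = 2}"

definition matchings :: "'a set \<Rightarrow> nat \<Rightarrow> 'a set set set" where
  "matchings L k = {B. B \<subseteq> pairs_in L \<and> pairwise disjnt B \<and> card B = k}"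

lemma finite_pairs_in: "finite L \<Longrightarrow> finite (pairs_in L)"
  unfolding pairs_in_def by (rule finite_subset[of _ "Pow L"]) auto

lemma finite_matchings: "finite L \<Longrightarrow> finite (matchings L k)"
  unfolding matchings_def
  by (rule finite_subset[of _ "Pow (pairs_in L)"]) (auto simp: finite_pairs_in)

lemma matchings_fin: "finite L \<Longrightarrow> B \<in> matchings L k \<Longrightarrow> finite B"
  unfolding matchings_def using finite_pairs_in finite_subset by blast

lemma card_pairs_in: "finite L \<Longrightarrow> card (pairs_in L) = card L choose 2"
  unfolding pairs_in_def by (rule n_subsets)

lemma matchings_0: "finite L \<Longrightarrow> matchings L 0 = {{}}"
  unfolding matchings_def using finite_pairs_in finite_subset by fastforce

lemma card_pair_in: "p \<in> pairs_in L \<Longrightarrow> finite L \<Longrightarrow> card (L - p) = card L - 2"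
  unfolding pairs_in_def by (simp add: card_Diff_subset finite_subset[of p L])

lemma matchings_bij:
  assumes "finite L"
  shows "bij_betw (\<lambda>(B,p). (p, B - {p})) (SIGMA B:matchings L (Suc k). B)
           (SIGMA p:pairs_in L. matchings (L - p) k)"
proof (rule bij_betwI[where g = "\<lambda>(p,B). (insert p B, p)"])
  show "(\<lambda>(B,p). (p, B - {p})) \<in> (SIGMA B:matchings L (Suc k). B) \<rightarrow> (SIGMA p:pairs_in L. matchings (L - p) k)"
  proof
    fix x assume x: "x \<in> (SIGMA B:matchings L (Suc k). B)"
    then obtain B p where xe: "x = (B,p)" and B: "B \<in> matchings L (Suc k)" and p: "p \<in> B" by auto
    have fB: "finite B" using matchings_fin[OF assms B] .
    have Bs: "B \<subseteq> pairs_in L" "pairwise disjnt B" "card B = Suc k" using B by (auto simp: matchings_def)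
    have pL: "p \<in> pairs_in L" using Bs p by auto
    have "B - {p} \<subseteq> pairs_in (L - p)"
    proof
      fix q assume q: "q \<in> B - {p}"
      then have "disjnt p q" using Bs(2) p unfolding pairwise_def by auto
      then show "q \<in> pairs_in (L - p)" using q Bs(1) by (auto simp: pairs_in_def disjnt_def)
    qed
    moreover have "pairwise disjnt (B - {p})" using Bs(2) by (rule pairwise_subset) auto
    moreover have "card (B - {p}) = k" using Bs(3) p fB by simp
    ultimately show "(case x of (B,p) \<Rightarrow> (p, B - {p})) \<in> (SIGMA p:pairs_in L. matchings (L - p) k)"
      using pL xe by (auto simp: matchings_def)
  qed
  show "(\<lambda>(p,B). (insert p B, p)) \<in> (SIGMA p:pairs_in L. matchings (L - p) k) \<rightarrow> (SIGMA B:matchings L (Suc k). B)"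
  proof
    fix x assume x: "x \<in> (SIGMA p:pairs_in L. matchings (L - p) k)"
    then obtain B p where xe: "x = (p,B)" and B: "B \<in> matchings (L - p) k" and p: "p \<in> pairs_in L" by auto
    have fB: "finite B" using matchings_fin[OF _ B] assms by simp
    have Bs: "B \<subseteq> pairs_in (L - p)" "pairwise disjnt B" "card B = k" using B by (auto simp: matchings_def)
    have pne: "p \<noteq> {}" using p by (auto simp: pairs_in_def)
    have pnB: "p \<notin> B" using Bs(1) pne by (auto simp: pairs_in_def)
    have "insert p B \<subseteq> pairs_in L" using Bs(1) p by (auto simp: pairs_in_def)
    moreover have "pairwise disjnt (insert p B)"
      using Bs(1,2) unfolding pairwise_insert by (auto simp: pairs_in_def disjnt_def)
    moreover have "card (insert p B) = Suc k" using Bs(3) pnB fB by simp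
    ultimately show "(case x of (p,B) \<Rightarrow> (insert p B, p)) \<in> (SIGMA B:matchings L (Suc k). B)"
      using xe by (auto simp: matchings_def)
  qed
  show "\<And>x. x \<in> (SIGMA B:matchings L (Suc k). B) \<Longrightarrow> (case (case x of (B,p) \<Rightarrow> (p, B - {p})) of (p,B) \<Rightarrow> (insert p B, p)) = x"
    by auto
  show "\<And>y. y \<in> (SIGMA p:pairs_in L. matchings (L - p) k) \<Longrightarrow> (case (case y of (p,B) \<Rightarrow> (insert p B, p)) of (B,p) \<Rightarrow> (p, B - {p})) = y"
  proof -
    fix y assume y: "y \<in> (SIGMA p:pairs_in L. matchings (L - p) k)"
    then obtain B p where xe: "y = (p,B)" and B: "B \<in> matchings (L - p) k" and p: "p \<in> pairs_in L" by auto
    have pne: "p \<noteq> {}" using p by (auto simp: pairs_in_def)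
    have pnB: "p \<notin> B" using B pne by (auto simp: pairs_in_def matchings_def)
    show "(case (case y of (p,B) \<Rightarrow> (insert p B, p)) of (B,p) \<Rightarrow> (p, B - {p})) = y"
      using xe pnB by auto
  qed
qed

lemma card_matchings:
  "finite L \<Longrightarrow> real (card (matchings L k)) = (1 / fact k) * (\<Prod>i<k. real ((card L - 2 * i) choose 2))"
proof (induction k arbitrary: L)
  case 0
  then show ?case by (simp add: matchings_0)
next
  case (Suc k)
  let ?X = "SIGMA B:matchings L (Suc k). B"
  let ?Y = "SIGMA p:pairs_in L. matchings (L - p) k"
  have "card ?X = card ?Y" using bij_betw_same_card[OF matchings_bij[OF Suc.prems]] .
  moreover have "card ?X = (\<Sum>B\<in>matchings L (Suc k). card B)"
    using Suc.prems by (intro card_SigmaI) (auto simp: finite_matchings matchings_fin)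
  moreover have "(\<Sum>B\<in>matchings L (Suc k). card B) = Suc k * card (matchings L (Suc k))"
    by (simp add: matchings_def)
  moreover have "card ?Y = (\<Sum>p\<in>pairs_in L. card (matchings (L - p) k))"
    using Suc.prems by (intro card_SigmaI) (auto simp: finite_matchings finite_pairs_in)
  ultimately have eq: "real (Suc k) * real (card (matchings L (Suc k))) = (\<Sum>p\<in>pairs_in L. real (card (matchings (L - p) k)))"
    by (metis of_nat_mult of_nat_sum)
  have "\<And>p. p \<in> pairs_in L \<Longrightarrow> real (card (matchings (L - p) k)) = (1 / fact k) * (\<Prod>i<k. real ((card L - 2 - 2 * i) choose 2))"
  proof -
    fix p assume "p \<in> pairs_in L"
    then have "card (L - p) = card L - 2" using card_pair_in Suc.prems by blast
    then show "?thesis p" using Suc.IH[of "L - p"] Suc.prems by (simp add: diff_diff_add)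
  qed
  then have "(\<Sum>p\<in>pairs_in L. real (card (matchings (L - p) k))) =
       real (card L choose 2) * ((1 / fact k) * (\<Prod>i<k. real ((card L - 2 - 2 * i) choose 2)))"
    using card_pairs_in[OF Suc.prems] by simp
  with eq have "real (card (matchings L (Suc k))) =
     (real (card L choose 2) * ((1 / fact k) * (\<Prod>i<k. real ((card L - 2 - 2 * i) choose 2)))) / real (Suc k)"
    by (simp add: eq_divide_eq mult_ac del: of_nat_Suc)
  moreover have "(\<Prod>i<Suc k. real ((card L - 2 * i) choose 2)) =
      real (card L choose 2) * (\<Prod>i<k. real ((card L - 2 - 2 * i) choose 2))"
    by (simp add: prod.lessThan_Suc_shift diff_diff_add del: prod.lessThan_Suc)
  ultimately show ?case by (simp add: fact_Suc del: of_nat_Suc)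
qed

definition MH :: "'a set \<Rightarrow> 'a set \<Rightarrow> nat \<Rightarrow> 'a set set set" where
  "MH L H k = {B. B \<in> matchings (L \<union> H) k \<and> H \<subseteq> \<Union>B \<and> (\<forall>p\<in>B. p \<inter> L \<noteq> {})}"

lemma MH_empty: "finite L \<Longrightarrow> MH L {} k = matchings L k"
  unfolding MH_def matchings_def pairs_in_def by (force simp: card_2_iff)

lemma MH_0: "finite L \<Longrightarrow> finite H \<Longrightarrow> x \<in> H \<Longrightarrow> MH L H 0 = {}"
  unfolding MH_def using matchings_0[of "L \<union> H"] by auto

lemma MH_insert:
  assumes fin: "finite L" "finite H" and xL: "x \<notin> L" and xH: "x \<notin> H" and dis: "L \<inter> H = {}"
  shows "MH L (insert x H) (Suc k) = (\<Union>y\<in>L. insert {x,y} ` MH (L - {y}) H k)"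
proof
  show "MH L (insert x H) (Suc k) \<subseteq> (\<Union>y\<in>L. insert {x,y} ` MH (L - {y}) H k)"
  proof
    fix B assume B: "B \<in> MH L (insert x H) (Suc k)"
    have fB: "finite B" using B fin matchings_fin[of "L \<union> insert x H"] by (auto simp: MH_def)
    have Bs: "B \<subseteq> pairs_in (L \<union> insert x H)" "pairwise disjnt B" "card B = Suc k"
       "insert x H \<subseteq> \<Union>B" "\<forall>p\<in>B. p \<inter> L \<noteq> {}"
      using B by (auto simp: MH_def matchings_def)
    obtain p where pB: "p \<in> B" and xp: "x \<in> p" using Bs(4) by auto
    obtain y where yp: "y \<in> p" and yL: "y \<in> L" using Bs(5) pB by auto
    have xy: "x \<noteq> y" using xL yL by auto
    have "card p = 2" using Bs(1) pB by (auto simp: pairs_in_def)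
    then have pe: "p = {x,y}" using xp yp xy by (auto simp: card_2_iff)
    let ?B' = "B - {p}"
    have "?B' \<in> MH (L - {y}) H k"
    proof -
      have dq: "\<And>q. q \<in> ?B' \<Longrightarrow> x \<notin> q \<and> y \<notin> q"
      proof -
        fix q assume q: "q \<in> ?B'"
        then have "disjnt p q" using Bs(2) pB unfolding pairwise_def by auto
        then show "x \<notin> q \<and> y \<notin> q" using pe by (auto simp: disjnt_def)
      qed
      have "?B' \<subseteq> pairs_in (L - {y} \<union> H)"
        using Bs(1) dq by (auto simp: pairs_in_def)
      moreover have "pairwise disjnt ?B'" using Bs(2) by (rule pairwise_subset) auto
      moreover have "card ?B' = k" using Bs(3) pB fB by simp
      moreover have "H \<subseteq> \<Union>?B'"
      proof
        fix z assume z: "z \<in> H"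
        then obtain q where "q \<in> B" "z \<in> q" using Bs(4) by auto
        moreover have "z \<noteq> x" "z \<noteq> y" using z xH yL dis by auto
        ultimately show "z \<in> \<Union>?B'" using pe by auto
      qed
      moreover have "\<forall>q\<in>?B'. q \<inter> (L - {y}) \<noteq> {}" using Bs(5) dq by auto
      ultimately show ?thesis by (auto simp: MH_def matchings_def)
    qed
    moreover have "B = insert {x,y} ?B'" using pB pe by auto
    ultimately show "B \<in> (\<Union>y\<in>L. insert {x,y} ` MH (L - {y}) H k)" using yL by blast
  qed
next
  show "(\<Union>y\<in>L. insert {x,y} ` MH (L - {y}) H k) \<subseteq> MH L (insert x H) (Suc k)"
  proof
    fix B assume "B \<in> (\<Union>y\<in>L. insert {x,y} ` MH (L - {y}) H k)"
    then obtain y B' where yL: "y \<in> L" and B': "B' \<in> MH (L - {y}) H k" and Be: "B = insert {x,y} B'"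
      by auto
    have fB: "finite B'" using B' fin matchings_fin[of "L - {y} \<union> H"] by (auto simp: MH_def)
    have Bs: "B' \<subseteq> pairs_in (L - {y} \<union> H)" "pairwise disjnt B'" "card B' = k"
       "H \<subseteq> \<Union>B'" "\<forall>p\<in>B'. p \<inter> (L - {y}) \<noteq> {}"
      using B' by (auto simp: MH_def matchings_def)
    have xy: "x \<noteq> y" using xL yL by auto
    have nq: "\<And>q. q \<in> B' \<Longrightarrow> x \<notin> q \<and> y \<notin> q" using Bs(1) xL xH dis yL by (auto simp: pairs_in_def)
    have pn: "{x,y} \<notin> B'" using nq by auto
    have "B \<subseteq> pairs_in (L \<union> insert x H)" using Bs(1) Be yL xy by (auto simp: pairs_in_def)
    moreover have "pairwise disjnt B" unfolding Be pairwise_insert using Bs(2) nq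
      by (auto simp: disjnt_def)
    moreover have "card B = Suc k" using Be pn fB Bs(3) by simp
    moreover have "insert x H \<subseteq> \<Union>B" using Be Bs(4) by auto
    moreover have "\<forall>p\<in>B. p \<inter> L \<noteq> {}" using Be Bs(5) yL by auto
    ultimately show "B \<in> MH L (insert x H) (Suc k)" by (auto simp: MH_def matchings_def)
  qed
qed

lemma finite_MH: "finite L \<Longrightarrow> finite H \<Longrightarrow> finite (MH L H k)"
  unfolding MH_def using finite_matchings[of "L \<union> H" k] by (auto intro: finite_subset)

lemma card_MH:
  assumes "finite H"
  shows "finite L \<Longrightarrow> L \<inter> H = {} \<Longrightarrow> real (card (MH L H k)) =
    (if card H \<le> k then (\<Prod>t<card H. real (card L - t)) * (1 / fact (k - card H))
        * (\<Prod>i<k - card H. real ((card L - card H - 2 * i) choose 2)) else 0)"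
  using assms
proof (induction H arbitrary: L k rule: finite_induct)
  case empty
  then show ?case by (simp add: MH_empty card_matchings)
next
  case (insert x H)
  show ?case
  proof (cases k)
    case 0
    then show ?thesis using MH_0[of L "insert x H" x] insert by simp
  next
    case (Suc k')
    have xL: "x \<notin> L" and dis: "L \<inter> H = {}" using insert by auto
    have "card (MH L (insert x H) k) = (\<Sum>y\<in>L. card (insert {x,y} ` MH (L - {y}) H k'))"
      unfolding Suc MH_insert[OF insert.prems(1) insert.hyps(1) xL insert.hyps(2) dis]
    proof (rule card_UN_disjoint)
      show "finite L" by fact
      show "\<forall>i\<in>L. finite (insert {x, i} ` MH (L - {i}) H k')"
        using insert.prems insert.hyps by (auto intro!: finite_imageI finite_MH)
      show "\<forall>i\<in>L. \<forall>j\<in>L. i \<noteq> j \<longrightarrow> insert {x, i} ` MH (L - {i}) H k' \<inter> insert {x, j} ` MH (L - {j}) H k' = {}"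
      proof (intro ballI impI)
        fix i j assume i: "i \<in> L" and j: "j \<in> L" and ij: "i \<noteq> j"
        show "insert {x, i} ` MH (L - {i}) H k' \<inter> insert {x, j} ` MH (L - {j}) H k' = {}"
        proof (rule ccontr)
          assume "insert {x, i} ` MH (L - {i}) H k' \<inter> insert {x, j} ` MH (L - {j}) H k' \<noteq> {}"
          then obtain B1 B2 where B2: "B2 \<in> MH (L - {j}) H k'" and e: "insert {x,i} B1 = insert {x,j} B2" by blast
          have "{x,i} \<in> insert {x,j} B2" using e by blast
          moreover have "{x,i} \<noteq> {x,j}" using ij xL i j by (auto simp: doubleton_eq_iff)
          ultimately have "{x,i} \<in> B2" by auto
          then have "x \<in> L - {j} \<union> H" using B2 by (auto simp: MH_def matchings_def pairs_in_def)
          then show False using xL insert.hyps(2) by auto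
        qed
      qed
    qed
    also have "\<dots> = (\<Sum>y\<in>L. card (MH (L - {y}) H k'))"
    proof (rule sum.cong[OF refl], rule card_image)
      fix y assume "y \<in> L"
      have "\<And>B. B \<in> MH (L - {y}) H k' \<Longrightarrow> {x,y} \<notin> B"
        using xL insert.hyps(2) by (auto simp: MH_def matchings_def pairs_in_def)
      then show "inj_on (insert {x,y}) (MH (L - {y}) H k')"
        unfolding inj_on_def by (metis insert_absorb insert_commute insert_ident)
    qed
    finally have c: "real (card (MH L (insert x H) k)) = (\<Sum>y\<in>L. real (card (MH (L - {y}) H k')))"
      by simp
    let ?F = "(if card H \<le> k' then (\<Prod>t<card H. real (card L - 1 - t)) * (1 / fact (k' - card H))
        * (\<Prod>i<k' - card H. real ((card L - 1 - card H - 2 * i) choose 2)) else 0)"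
    have "\<And>y. y \<in> L \<Longrightarrow> real (card (MH (L - {y}) H k')) = ?F"
    proof -
      fix y assume y: "y \<in> L"
      have "card (L - {y}) = card L - 1" using y insert.prems by simp
      moreover have "finite (L - {y})" "(L - {y}) \<inter> H = {}" using insert.prems by auto
      ultimately show "real (card (MH (L - {y}) H k')) = ?F" using insert.IH[of "L - {y}" k'] by simp
    qed
    then have "real (card (MH L (insert x H) k)) = real (card L) * ?F" using c by simp
    moreover have "(\<Prod>t<Suc (card H). real (card L - t)) = real (card L) * (\<Prod>t<card H. real (card L - 1 - t))"
      by (simp add: prod.lessThan_Suc_shift del: prod.lessThan_Suc)
    ultimately show ?thesis using insert.hyps Suc by simp
  qed
qed



lemma Inl_dev: "Inl a \<in> devices I S \<longleftrightarrow> 1 \<le> a \<and> a \<le> I"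
  by (auto simp: devices_def)

lemma Inr_dev: "Inr a \<in> devices I S \<longleftrightarrow> 1 \<le> a \<and> a \<le> S"
  by (auto simp: devices_def)

definition reach_invar :: "nat \<Rightarrow> nat \<Rightarrow> nat \<Rightarrow> device set set \<Rightarrow> bool" where
  "reach_invar I S t M \<longleftrightarrow> pairwise disjnt M \<and>
    (\<forall>p\<in>M. \<exists>a d. p = {Inl a, d} \<and> 1 \<le> a \<and> a \<le> t \<and> d \<in> devices I S \<and> d \<noteq> Inl a \<and>
        (\<forall>c. d = Inl c \<longrightarrow> a < c) \<and> (\<forall>c. 1 \<le> c \<and> c < a \<longrightarrow> Inl c \<in> \<Union>M)) \<and>
    (\<forall>a. 1 \<le> a \<and> a \<le> t \<longrightarrow> Inl a \<in> \<Union>M \<or> unpaired I S M = {Inl a})"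

lemma reach_inv: "t \<le> I \<Longrightarrow> M \<in> reachable I S t \<Longrightarrow> reach_invar I S t M"
proof (induction t arbitrary: M)
  case 0
  then show ?case by (simp add: reach_invar_def)
next
  case (Suc t)
  from Suc.prems obtain M0 where M0: "M0 \<in> reachable I S t" and
    step: "if Inl (Suc t) \<in> unpaired I S M0 \<and> unpaired I S M0 - {Inl (Suc t)} \<noteq> {}
         then (\<exists>d \<in> unpaired I S M0 - {Inl (Suc t)}. M = insert {Inl (Suc t), d} M0)
         else M = M0" by auto
  have iv: "reach_invar I S t M0" using Suc.IH M0 Suc.prems by simp
  have iv1: "pairwise disjnt M0" and
    iv2: "\<forall>p\<in>M0. \<exists>a d. p = {Inl a, d} \<and> 1 \<le> a \<and> a \<le> t \<and> d \<in> devices I S \<and> d \<noteq> Inl a \<and>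
        (\<forall>c. d = Inl c \<longrightarrow> a < c) \<and> (\<forall>c. 1 \<le> c \<and> c < a \<longrightarrow> Inl c \<in> \<Union>M0)" and
    iv3: "\<forall>a. 1 \<le> a \<and> a \<le> t \<longrightarrow> Inl a \<in> \<Union>M0 \<or> unpaired I S M0 = {Inl a}"
    using iv unfolding reach_invar_def by blast+
  have tdev: "Inl (Suc t) \<in> devices I S" using Suc.prems by (simp add: Inl_dev)
  show ?case
  proof (cases "Inl (Suc t) \<in> unpaired I S M0 \<and> unpaired I S M0 - {Inl (Suc t)} \<noteq> {}")
    case True
    then obtain d where d: "d \<in> unpaired I S M0" "d \<noteq> Inl (Suc t)" and Me: "M = insert {Inl (Suc t), d} M0"
      using step by auto
    have tu: "Inl (Suc t) \<in> unpaired I S M0" using True by simp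
    have low: "\<And>c. 1 \<le> c \<Longrightarrow> c \<le> t \<Longrightarrow> Inl c \<in> \<Union>M0"
    proof -
      fix c assume "1 \<le> c" "c \<le> t"
      then have "Inl c \<in> \<Union>M0 \<or> unpaired I S M0 = {Inl c}" using iv3 by blast
      then show "Inl c \<in> \<Union>M0" using tu \<open>c \<le> t\<close> by auto
    qed
    have sub: "\<Union>M0 \<subseteq> \<Union>M" using Me by auto
    have dd: "d \<in> devices I S" "d \<notin> \<Union>M0" using d by (auto simp: unpaired_def)
    have tn: "Inl (Suc t) \<notin> \<Union>M0" using tu by (auto simp: unpaired_def)
    have "pairwise disjnt M"
      unfolding Me pairwise_insert using iv1 dd tn by (auto simp: disjnt_def)
    moreover have "\<forall>p\<in>M. \<exists>a d. p = {Inl a, d} \<and> 1 \<le> a \<and> a \<le> Suc t \<and> d \<in> devices I S \<and> d \<noteq> Inl a \<and>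
        (\<forall>c. d = Inl c \<longrightarrow> a < c) \<and> (\<forall>c. 1 \<le> c \<and> c < a \<longrightarrow> Inl c \<in> \<Union>M)"
    proof
      fix p assume "p \<in> M"
      then consider "p = {Inl (Suc t), d}" | "p \<in> M0" using Me by auto
      then show "\<exists>a d. p = {Inl a, d} \<and> 1 \<le> a \<and> a \<le> Suc t \<and> d \<in> devices I S \<and> d \<noteq> Inl a \<and>
        (\<forall>c. d = Inl c \<longrightarrow> a < c) \<and> (\<forall>c. 1 \<le> c \<and> c < a \<longrightarrow> Inl c \<in> \<Union>M)"
      proof cases
        case 1
        have "\<forall>c. d = Inl c \<longrightarrow> Suc t < c"
        proof (intro allI impI)
          fix c assume dc: "d = Inl c"
          have "1 \<le> c" using dd dc by (simp add: Inl_dev)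
          moreover have "c \<noteq> Suc t" using d dc by auto
          moreover have "\<not> c \<le> t" using low dd dc \<open>1 \<le> c\<close> by blast
          ultimately show "Suc t < c" by simp
        qed
        moreover have "\<forall>c. 1 \<le> c \<and> c < Suc t \<longrightarrow> Inl c \<in> \<Union>M" using low sub less_Suc_eq_le by blast
        ultimately show ?thesis using 1 dd d by (intro exI[of _ "Suc t"] exI[of _ d]) auto
      next
        case 2
        then show ?thesis using iv2 sub by (meson le_SucI subsetD)
      qed
    qed
    moreover have "\<forall>a. 1 \<le> a \<and> a \<le> Suc t \<longrightarrow> Inl a \<in> \<Union>M \<or> unpaired I S M = {Inl a}"
      using low sub Me by (auto simp: le_Suc_eq)
    ultimately show ?thesis unfolding reach_invar_def by blast
  next
    case False
    then have Me: "M = M0" using step by auto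
    have "\<forall>a. 1 \<le> a \<and> a \<le> Suc t \<longrightarrow> Inl a \<in> \<Union>M \<or> unpaired I S M = {Inl a}"
    proof (intro allI impI)
      fix a assume a: "1 \<le> a \<and> a \<le> Suc t"
      show "Inl a \<in> \<Union>M \<or> unpaired I S M = {Inl a}"
      proof (cases "a = Suc t")
        case True
        then show ?thesis using False tdev Me by (auto simp: unpaired_def)
      next
        case False
        then show ?thesis using iv3 a Me by auto
      qed
    qed
    then show ?thesis using iv1 iv2 Me unfolding reach_invar_def by (meson le_SucI)
  qed
qed

lemma realize:
  assumes h: "1 \<le> h" "h \<le> I" and pd: "pairwise disjnt M"
    and ini: "\<forall>p\<in>M. \<exists>a d. p = {Inl a, d} \<and> 1 \<le> a \<and> a < h \<and> d \<in> devices I S \<and> d \<noteq> Inl a \<and> (\<forall>c. d = Inl c \<longrightarrow> a < c)"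
    and cov: "\<Union>M = devices I S - {Inl h}"
  shows "M \<in> reachable I S I"
proof -
  from ini obtain ia od where io: "\<forall>p\<in>M. p = {Inl (ia p), od p} \<and> 1 \<le> ia p \<and> ia p < h \<and> od p \<in> devices I S
      \<and> od p \<noteq> Inl (ia p) \<and> (\<forall>c. od p = Inl c \<longrightarrow> ia p < c)" by metis
  have iah: "\<And>p. p \<in> M \<Longrightarrow> 1 \<le> ia p \<and> ia p < h" using io by blast
  have D: "\<And>p q z. p \<in> M \<Longrightarrow> q \<in> M \<Longrightarrow> z \<in> p \<Longrightarrow> z \<in> q \<Longrightarrow> p = q"
    using pd unfolding pairwise_def disjnt_def by blast
  define Mt where "Mt t = {p\<in>M. ia p \<le> t}" for t
  have "t \<le> I \<Longrightarrow> Mt t \<in> reachable I S t" for t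
  proof (induction t)
    case 0
    have "Mt 0 = {}" using iah by (fastforce simp: Mt_def)
    then show ?case by simp
  next
    case (Suc t)
    have IH: "Mt t \<in> reachable I S t" using Suc by simp
    have tdev: "Inl (Suc t) \<in> devices I S" using Suc.prems by (simp add: Inl_dev)
    show ?case
    proof (cases "\<exists>p\<in>M. ia p = Suc t")
      case True
      then obtain p where p: "p \<in> M" "ia p = Suc t" by blast
      have pp: "p = {Inl (ia p), od p}" "od p \<in> devices I S" "od p \<noteq> Inl (ia p)"
        using io p(1) by blast+
      have pe: "p = {Inl (Suc t), od p}" and dd: "od p \<in> devices I S" "od p \<noteq> Inl (Suc t)"
        using pp p(2) by metis+
      have tp: "Inl (Suc t) \<in> p" "od p \<in> p" using pe by (metis insertI1, metis insertI1 insert_commute)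
      have n1: "Inl (Suc t) \<notin> \<Union>(Mt t)"
      proof
        assume "Inl (Suc t) \<in> \<Union>(Mt t)"
        then obtain q where q: "q \<in> M" "ia q \<le> t" "Inl (Suc t) \<in> q" by (auto simp: Mt_def)
        then show False using D[OF q(1) p(1) q(3) tp(1)] q p by simp
      qed
      have n2: "od p \<notin> \<Union>(Mt t)"
      proof
        assume "od p \<in> \<Union>(Mt t)"
        then obtain q where q: "q \<in> M" "ia q \<le> t" "od p \<in> q" by (auto simp: Mt_def)
        then show False using D[OF q(1) p(1) q(3) tp(2)] q p by simp
      qed
      have Mteq: "Mt (Suc t) = insert p (Mt t)"
      proof
        show "Mt (Suc t) \<subseteq> insert p (Mt t)"
        proof
          fix q assume q: "q \<in> Mt (Suc t)"
          show "q \<in> insert p (Mt t)"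
          proof (cases "ia q = Suc t")
            case True
            moreover have "q \<in> M" using q by (auto simp: Mt_def)
            moreover have "q = {Inl (ia q), od q}" using io \<open>q \<in> M\<close> by blast
            ultimately have "Inl (Suc t) \<in> q" by (metis insertI1)
            then have "q = p" using D[of q p] q p tp by (auto simp: Mt_def)
            then show ?thesis by simp
          next
            case False
            then show ?thesis using q by (auto simp: Mt_def)
          qed
        qed
        show "insert p (Mt t) \<subseteq> Mt (Suc t)" using p by (auto simp: Mt_def)
      qed
      have u: "Inl (Suc t) \<in> unpaired I S (Mt t)" "od p \<in> unpaired I S (Mt t) - {Inl (Suc t)}"
        using n1 n2 tdev dd by (auto simp: unpaired_def)
      then have c: "Inl (Suc t) \<in> unpaired I S (Mt t) \<and> unpaired I S (Mt t) - {Inl (Suc t)} \<noteq> {}"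
        by blast
      have "insert {Inl (Suc t), od p} (Mt t) = Mt (Suc t)" using Mteq by (simp add: pe[symmetric])
      then have ex: "\<exists>d\<in>unpaired I S (Mt t) - {Inl (Suc t)}. Mt (Suc t) = insert {Inl (Suc t), d} (Mt t)"
        using u(2) by blast
      show ?thesis unfolding reachable.simps
        by (intro CollectI bexI[OF _ IH]) (subst if_P[OF c], rule ex)
    next
      case False
      have eq: "Mt (Suc t) = Mt t" using False by (auto simp: Mt_def le_Suc_eq)
      have "\<not> (Inl (Suc t) \<in> unpaired I S (Mt t) \<and> unpaired I S (Mt t) - {Inl (Suc t)} \<noteq> {})"
      proof (cases "Suc t = h")
        case True
        have "Mt t = M" using iah True by (fastforce simp: Mt_def)
        then have "unpaired I S (Mt t) \<subseteq> {Inl h}" using cov by (auto simp: unpaired_def)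
        then show ?thesis using True by auto
      next
        case hne: False
        then have "Inl (Suc t) \<in> \<Union>M" using cov tdev by auto
        then obtain p where p: "p \<in> M" "Inl (Suc t) \<in> p" by auto
        have "ia p \<noteq> Suc t" using False p by auto
        have pp: "p = {Inl (ia p), od p}" "\<forall>c. od p = Inl c \<longrightarrow> ia p < c"
          using io p(1) by blast+
        have "Inl (Suc t) \<in> {Inl (ia p), od p}" using pp(1) p(2) by metis
        then have "od p = Inl (Suc t)" using \<open>ia p \<noteq> Suc t\<close> by auto
        then have "ia p < Suc t" using pp(2) by blast
        then have "p \<in> Mt t" using p by (auto simp: Mt_def)
        then show ?thesis using p by (auto simp: unpaired_def)
      qed
      then show ?thesis unfolding reachable.simps
        by (intro CollectI bexI[OF _ IH]) (simp only: eq if_False)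
    qed
  qed
  then have "Mt I \<in> reachable I S I" by simp
  moreover have "Mt I = M" using iah h by (fastforce simp: Mt_def)
  ultimately show ?thesis by simp
qed



lemma finite_devices: "finite (devices I S)"
  by (simp add: devices_def)

lemma card_devices: "card (devices I S) = I + S"
  unfolding devices_def
  by (subst card_Un_disjoint) (auto simp: card_image)

lemma sub1:
  assumes h: "1 \<le> h" "h \<le> I" and IS: "I > S" "2 * j = I - S - 1"
    and M: "M \<in> reachable I S I" and hM: "Inl h \<notin> \<Union>M"
  shows "bb_pairings M \<in> MH (Inl ` {1..<h}) (Inl ` {h<..I}) j"
proof -
  have iv: "reach_invar I S I M" using reach_inv[OF _ M] by simp
  have pd: "pairwise disjnt M" and
    rep: "\<forall>p\<in>M. \<exists>a d. p = {Inl a, d} \<and> 1 \<le> a \<and> a \<le> I \<and> d \<in> devices I S \<and> d \<noteq> Inl a \<and>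
        (\<forall>c. d = Inl c \<longrightarrow> a < c) \<and> (\<forall>c. 1 \<le> c \<and> c < a \<longrightarrow> Inl c \<in> \<Union>M)" and
    iv3: "\<forall>a. 1 \<le> a \<and> a \<le> I \<longrightarrow> Inl a \<in> \<Union>M \<or> unpaired I S M = {Inl a}"
    using iv unfolding reach_invar_def by blast+
  have D: "\<And>p q z. p \<in> M \<Longrightarrow> q \<in> M \<Longrightarrow> z \<in> p \<Longrightarrow> z \<in> q \<Longrightarrow> p = q"
    using pd unfolding pairwise_def disjnt_def by blast
  have unp: "unpaired I S M = {Inl h}" using iv3 h hM by blast
  have sub: "\<Union>M \<subseteq> devices I S"
  proof
    fix z assume "z \<in> \<Union>M"
    then obtain p where p: "p \<in> M" "z \<in> p" by blast
    obtain a d where "p = {Inl a, d}" "1 \<le> a" "a \<le> I" "d \<in> devices I S" using rep p(1) by blast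
    then show "z \<in> devices I S" using p(2) by (auto simp: Inl_dev)
  qed
  have cov: "\<Union>M = devices I S - {Inl h}" using unp sub unfolding unpaired_def by blast
  have rep2: "\<And>p. p \<in> M \<Longrightarrow> \<exists>a d. p = {Inl a, d} \<and> 1 \<le> a \<and> a < h \<and> d \<in> devices I S \<and> d \<noteq> Inl a \<and>
        (\<forall>c. d = Inl c \<longrightarrow> a < c)"
  proof -
    fix p assume p: "p \<in> M"
    obtain a d where ad: "p = {Inl a, d}" "1 \<le> a" "a \<le> I" "d \<in> devices I S" "d \<noteq> Inl a"
        "\<forall>c. d = Inl c \<longrightarrow> a < c" "\<forall>c. 1 \<le> c \<and> c < a \<longrightarrow> Inl c \<in> \<Union>M" using rep p by blast
    have "a \<noteq> h" using ad(1) p hM by blast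
    moreover have "\<not> h < a" using ad(7) h hM by blast
    ultimately have "a < h" by simp
    then show "?thesis p" using ad by blast
  qed
  define B where "B = bb_pairings M"
  have BM: "B \<subseteq> M" by (auto simp: B_def bb_pairings_def)
  have fM: "finite M"
    by (rule finite_subset[of _ "Pow (devices I S)"]) (use sub finite_devices in auto)
  have c2: "\<And>p. p \<in> M \<Longrightarrow> card p = 2"
    using rep2 by (metis card_2_iff)
  have "B \<subseteq> pairs_in (Inl ` {1..<h} \<union> Inl ` {h<..I})"
  proof
    fix p assume pB: "p \<in> B"
    then have p: "p \<in> M" "p \<subseteq> range Inl" by (auto simp: B_def bb_pairings_def)
    obtain a d where ad: "p = {Inl a, d}" "1 \<le> a" "a < h" "d \<in> devices I S" "d \<noteq> Inl a"
        "\<forall>c. d = Inl c \<longrightarrow> a < c" using rep2[OF p(1)] by blast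
    obtain c where dc: "d = Inl c" using p(2) ad(1) by auto
    have "c \<noteq> h" using dc ad(1) p(1) hM by blast
    moreover have "c \<le> I" "a < c" using ad(4,6) dc by (auto simp: Inl_dev)
    ultimately have "Inl c \<in> Inl ` {1..<h} \<union> Inl ` {h<..I}" using ad(2)
      by (cases "c < h") auto
    then show "p \<in> pairs_in (Inl ` {1..<h} \<union> Inl ` {h<..I})"
      using ad dc c2[OF p(1)] by (auto simp: pairs_in_def)
  qed
  moreover have "pairwise disjnt B" using pd BM pairwise_subset by blast
  moreover have "Inl ` {h<..I} \<subseteq> \<Union>B"
  proof
    fix z :: device assume "z \<in> Inl ` {h<..I}"
    then obtain c where c: "z = Inl c" "h < c" "c \<le> I" by auto
    have "z \<in> devices I S" using c h by (simp add: Inl_dev)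
    then have "z \<in> \<Union>M" using cov c by auto
    then obtain p where p: "p \<in> M" "z \<in> p" by auto
    obtain a d where ad: "p = {Inl a, d}" "1 \<le> a" "a < h" "d \<in> devices I S" "d \<noteq> Inl a"
        "\<forall>c. d = Inl c \<longrightarrow> a < c" using rep2[OF p(1)] by blast
    have "d = z" using ad(1,3) p(2) c by auto
    then have "p \<in> B" using ad(1) c p(1) by (auto simp: B_def bb_pairings_def)
    then show "z \<in> \<Union>B" using p(2) by auto
  qed
  moreover have "\<forall>p\<in>B. p \<inter> Inl ` {1..<h} \<noteq> {}"
  proof
    fix p assume "p \<in> B"
    then have p: "p \<in> M" using BM by auto
    obtain a d where ad: "p = {Inl a, d}" "1 \<le> a" "a < h" using rep2[OF p] by blast
    then show "p \<inter> Inl ` {1..<h} \<noteq> {}" by auto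
  qed
  moreover have "card B = j"
  proof -
    have "card (\<Union>M) = sum card M" by (rule card_Union_disjoint[OF pd]) (use c2 card_ge_0_finite in force)
    also have "\<dots> = 2 * card M" using c2 by simp
    finally have e1: "2 * card M = I + S - 1"
      using cov card_devices[of I S] finite_devices h by (simp add: Inl_dev)
    let ?f = "\<lambda>p. p \<inter> range Inr"
    have img: "?f ` (M - B) = (\<lambda>k. {Inr k :: device}) ` {1..S}"
    proof
      show "?f ` (M - B) \<subseteq> (\<lambda>k. {Inr k :: device}) ` {1..S}"
      proof
        fix y assume "y \<in> ?f ` (M - B)"
        then obtain p where y: "y = ?f p" and p: "p \<in> M" "p \<notin> B" by auto
        obtain a d where ad: "p = {Inl a, d}" "d \<in> devices I S" using rep2[OF p(1)] by blast
        have "\<not> p \<subseteq> range Inl" using p by (auto simp: B_def bb_pairings_def)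
        then obtain k where k: "d = Inr k" using ad(1) by (cases d) auto
        then have "1 \<le> k" "k \<le> S" using ad(2) by (auto simp: Inr_dev)
        moreover have "y = {Inr k}" using y ad(1) k by auto
        ultimately show "y \<in> (\<lambda>k. {Inr k :: device}) ` {1..S}" by auto
      qed
      show "(\<lambda>k. {Inr k :: device}) ` {1..S} \<subseteq> ?f ` (M - B)"
      proof
        fix y assume "y \<in> (\<lambda>k. {Inr k :: device}) ` {1..S}"
        then obtain k where k: "y = {Inr k}" "1 \<le> k" "k \<le> S" by auto
        then have "Inr k \<in> \<Union>M" using cov by (auto simp: Inr_dev)
        then obtain p where p: "p \<in> M" "Inr k \<in> p" by auto
        obtain a d where ad: "p = {Inl a, d}" using rep2[OF p(1)] by blast
        have "p \<notin> B" using p(2) by (auto simp: B_def bb_pairings_def)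
        moreover have "?f p = y" using ad p(2) k by auto
        ultimately show "y \<in> ?f ` (M - B)" using p by blast
      qed
    qed
    have inj: "inj_on ?f (M - B)"
    proof (rule inj_onI)
      fix p q assume p: "p \<in> M - B" and q: "q \<in> M - B" and e: "?f p = ?f q"
      obtain a d where ad: "p = {Inl a, d}" using rep2 p by blast
      have "\<not> p \<subseteq> range Inl" using p by (auto simp: B_def bb_pairings_def)
      then obtain k where k: "d = Inr k" using ad(1) by (cases d) auto
      then have "Inr k \<in> ?f q" using e ad by auto
      then show "p = q" using D[of p q "Inr k"] p q ad k by auto
    qed
    have "card (M - B) = S"
      using card_image[OF inj] img card_image[of "\<lambda>k. {Inr k :: device}" "{1..S}"] by (simp add: inj_on_def)
    moreover have "card M = card B + card (M - B)"
      using BM fM by (metis card_Diff_subset card_mono finite_subset le_add_diff_inverse)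
    ultimately show "card B = j" using e1 IS by linarith
  qed
  ultimately show ?thesis unfolding B_def MH_def matchings_def by blast
qed

lemma sub2:
  assumes h: "1 \<le> h" "h \<le> I" and IS: "I > S" "2 * j = I - S - 1"
    and B: "B \<in> MH (Inl ` {1..<h}) (Inl ` {h<..I}) j"
  shows "\<exists>M. M \<in> reachable I S I \<and> Inl h \<notin> \<Union>M \<and> bb_pairings M = B"
proof -
  define L :: "device set" where "L = Inl ` {1..<h}"
  define H :: "device set" where "H = Inl ` {h<..I}"
  have fL: "finite L" "finite H" by (auto simp: L_def H_def)
  have LH: "L \<inter> H = {}" by (auto simp: L_def H_def)
  have cL: "card L = h - 1" "card H = I - h" by (auto simp: L_def H_def card_image)
  have Bs: "B \<subseteq> pairs_in (L \<union> H)" "pairwise disjnt B" "card B = j" "H \<subseteq> \<Union>B"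
      "\<forall>p\<in>B. p \<inter> L \<noteq> {}"
    using B by (auto simp: MH_def matchings_def L_def H_def)
  have fB: "finite B" using matchings_fin[of "L \<union> H" B j] fL B by (auto simp: MH_def L_def H_def)
  have UB: "\<Union>B \<subseteq> L \<union> H" using Bs(1) by (auto simp: pairs_in_def)
  have cUB: "card (\<Union>B) = 2 * j"
  proof -
    have "card (\<Union>B) = sum card B"
      by (rule card_Union_disjoint[OF Bs(2)]) (use Bs(1) fL in \<open>auto simp: pairs_in_def intro: finite_subset\<close>)
    also have "\<dots> = 2 * card B" using Bs(1) by (simp add: pairs_in_def subset_iff)
    finally show ?thesis using Bs(3) by simp
  qed
  define R where "R = L - \<Union>B"
  have cR: "card R = S"
  proof -
    have "\<Union>B = (\<Union>B \<inter> L) \<union> H" using UB Bs(4) by blast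
    moreover have "card ((\<Union>B \<inter> L) \<union> H) = card (\<Union>B \<inter> L) + card H"
      by (rule card_Un_disjoint) (use fL LH in auto)
    ultimately have "card (\<Union>B) = card (\<Union>B \<inter> L) + card H" by simp
    moreover have "card R = card L - card (\<Union>B \<inter> L)"
      unfolding R_def using fL by (simp add: card_Diff_subset_Int Int_commute)
    moreover have "card (\<Union>B \<inter> L) \<le> card L" using fL by (simp add: card_mono)
    ultimately show ?thesis using cUB cL IS h by linarith
  qed
  have fR: "finite R" using fL by (simp add: R_def)
  obtain g where g: "bij_betw g {1..S} R"
    using finite_same_card_bij[of "{1..S}" R] fR cR by auto
  have gR: "\<And>k. k \<in> {1..S} \<Longrightarrow> g k \<in> R" using g by (auto simp: bij_betw_def)
  have ginj: "inj_on g {1..S}" using g by (auto simp: bij_betw_def)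
  have gim: "g ` {1..S} = R" using g by (auto simp: bij_betw_def)
  define C where "C = (\<lambda>k. {g k, Inr k}) ` {1..S}"
  define M where "M = B \<union> C"
  have Linl: "L \<union> H \<subseteq> range Inl" by (auto simp: L_def H_def)
  have gl: "\<And>k. k \<in> {1..S} \<Longrightarrow> \<exists>a. g k = Inl a \<and> 1 \<le> a \<and> a < h"
  proof -
    fix k assume "k \<in> {1..S}"
    then have "g k \<in> Inl ` {1..<h}" using gR by (auto simp: R_def L_def)
    then show "\<exists>a. g k = Inl a \<and> 1 \<le> a \<and> a < h" by auto
  qed
  have bb: "bb_pairings M = B"
  proof -
    have "\<forall>p\<in>B. p \<subseteq> range Inl" using Bs(1) Linl unfolding pairs_in_def by blast
    moreover have "\<forall>p\<in>C. \<not> p \<subseteq> range Inl" by (auto simp: C_def)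
    ultimately show ?thesis by (auto simp: bb_pairings_def M_def)
  qed
  have hM: "Inl h \<notin> \<Union>M"
  proof -
    have "Inl h \<notin> L \<union> H" by (auto simp: L_def H_def)
    moreover have "Inl h \<notin> \<Union>C"
    proof
      assume "Inl h \<in> \<Union>C"
      then obtain k where k: "k \<in> {1..S}" "Inl h \<in> {g k, Inr k}" by (auto simp: C_def)
      obtain a where "g k = Inl a" "a < h" using gl[OF k(1)] by blast
      then show False using k(2) by auto
    qed
    ultimately show ?thesis using UB by (auto simp: M_def)
  qed
  have pdM: "pairwise disjnt M"
    unfolding pairwise_def disjnt_def
  proof (intro ballI impI)
    fix p q assume p: "p \<in> M" and q: "q \<in> M" and pq: "p \<noteq> q"
    show "p \<inter> q = {}"
    proof (cases "p \<in> B")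
      case pB: True
      show ?thesis
      proof (cases "q \<in> B")
        case True
        then show ?thesis using Bs(2) pB pq by (auto simp: pairwise_def disjnt_def)
      next
        case False
        then obtain k where k: "k \<in> {1..S}" "q = {g k, Inr k}" using q by (auto simp: M_def C_def)
        have "g k \<notin> \<Union>B" using gR[OF k(1)] by (auto simp: R_def)
        moreover have "Inr k \<notin> \<Union>B" using UB Linl by auto
        ultimately show ?thesis using k pB by auto
      qed
    next
      case pB: False
      then obtain k where k: "k \<in> {1..S}" "p = {g k, Inr k}" using p by (auto simp: M_def C_def)
      have n1: "g k \<notin> \<Union>B" using gR[OF k(1)] by (auto simp: R_def)
      have n2: "Inr k \<notin> \<Union>B" using UB Linl by auto
      show ?thesis
      proof (cases "q \<in> B")
        case True
        then show ?thesis using k n1 n2 by auto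
      next
        case False
        then obtain k' where k': "k' \<in> {1..S}" "q = {g k', Inr k'}" using q by (auto simp: M_def C_def)
        have "k \<noteq> k'"
        proof
          assume "k = k'"
          then have "p = q" using k(2) k'(2) by simp
          then show False using pq by simp
        qed
        then have "g k \<noteq> g k'" using ginj k(1) k'(1) by (meson inj_on_eq_iff)
        moreover obtain a where "g k = Inl a" using gl[OF k(1)] by blast
        moreover obtain a' where "g k' = Inl a'" using gl[OF k'(1)] by blast
        ultimately have "g k \<noteq> Inr k'" "g k' \<noteq> Inr k" "g k \<noteq> g k'" by simp_all
        then show ?thesis unfolding k(2) k'(2) using \<open>k \<noteq> k'\<close> by auto
      qed
    qed
  qed
  have repM: "\<forall>p\<in>M. \<exists>a d. p = {Inl a, d} \<and> 1 \<le> a \<and> a < h \<and> d \<in> devices I S \<and> d \<noteq> Inl a \<and> (\<forall>c. d = Inl c \<longrightarrow> a < c)"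
  proof
    fix p assume p: "p \<in> M"
    show "\<exists>a d. p = {Inl a, d} \<and> 1 \<le> a \<and> a < h \<and> d \<in> devices I S \<and> d \<noteq> Inl a \<and> (\<forall>c. d = Inl c \<longrightarrow> a < c)"
    proof (cases "p \<in> B")
      case True
      then have pp: "p \<subseteq> L \<union> H" "card p = 2" "p \<inter> L \<noteq> {}" using Bs(1,5) by (auto simp: pairs_in_def)
      then obtain u v where uv: "p = {u, v}" "u \<noteq> v" by (auto simp: card_2_iff)
      have "u \<in> range Inl" "v \<in> range Inl" using uv pp(1) Linl by auto
      then obtain a c where ac: "u = Inl a" "v = Inl c" by blast
      have rng: "1 \<le> a \<and> a \<le> I \<and> a \<noteq> h" "1 \<le> c \<and> c \<le> I \<and> c \<noteq> h"
        using pp(1) uv ac h by (auto simp: L_def H_def)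
      have one: "a < h \<or> c < h" using pp(3) uv ac by (auto simp: L_def)
      show ?thesis
      proof (cases "a < c")
        case True
        then show ?thesis using uv ac rng one by (intro exI[of _ a] exI[of _ "Inl c"]) (auto simp: Inl_dev)
      next
        case False
        then have "c < a" using uv ac by auto
        then show ?thesis using uv ac rng one
          by (intro exI[of _ c] exI[of _ "Inl a"]) (auto simp: Inl_dev insert_commute)
      qed
    next
      case False
      then obtain k where k: "k \<in> {1..S}" "p = {g k, Inr k}" using p by (auto simp: M_def C_def)
      obtain a where a: "g k = Inl a" "1 \<le> a" "a < h" using gl[OF k(1)] by blast
      show ?thesis using k a by (intro exI[of _ a] exI[of _ "Inr k"]) (auto simp: Inr_dev)
    qed
  qed
  have covM: "\<Union>M = devices I S - {Inl h}"
  proof -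
    have "\<Union>C = R \<union> Inr ` {1..S}" using gim by (auto simp: C_def)
    then have "\<Union>M = \<Union>B \<union> R \<union> Inr ` {1..S}" by (auto simp: M_def)
    also have "\<dots> = L \<union> H \<union> Inr ` {1..S}" using UB Bs(4) by (auto simp: R_def)
    also have "\<dots> = devices I S - {Inl h}"
    proof
      show "L \<union> H \<union> Inr ` {1..S} \<subseteq> devices I S - {Inl h}" using h by (auto simp: L_def H_def devices_def)
      show "devices I S - {Inl h} \<subseteq> L \<union> H \<union> Inr ` {1..S}"
      proof
        fix z assume z: "z \<in> devices I S - {Inl h}"
        show "z \<in> L \<union> H \<union> Inr ` {1..S}"
        proof (cases z)
          case (Inl a)
          then have "1 \<le> a" "a \<le> I" "a \<noteq> h" using z by (auto simp: Inl_dev)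
          then show ?thesis using Inl by (cases "a < h") (auto simp: L_def H_def)
        next
          case (Inr k)
          then show ?thesis using z by (auto simp: Inr_dev)
        qed
      qed
    qed
    finally show ?thesis .
  qed
  have "M \<in> reachable I S I" using realize[OF h pdM repM covM] .
  then show ?thesis using hM bb by blast
qed



lemma prod_1_shift: "(\<Prod>t=1..n. f t) = (\<Prod>i<n. f (Suc i))"
  by (induction n) (simp_all add: mult.commute)

lemma Ndag_MH:
  assumes h: "1 \<le> h" "h \<le> I" and IS: "I > S" "2 * j = I - S - 1"
  shows "N_dagger I S h = card (MH (Inl ` {1..<h} :: device set) (Inl ` {h<..I}) j)"
proof -
  have "{bb_pairings M | M. M \<in> possible_wirings I S \<and> Inl h \<notin> \<Union>M} = MH (Inl ` {1..<h}) (Inl ` {h<..I}) j"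
  proof
    show "{bb_pairings M | M. M \<in> possible_wirings I S \<and> Inl h \<notin> \<Union>M} \<subseteq> MH (Inl ` {1..<h}) (Inl ` {h<..I}) j"
      using sub1[OF h IS] by (auto simp: possible_wirings_def)
    show "MH (Inl ` {1..<h}) (Inl ` {h<..I}) j \<subseteq> {bb_pairings M | M. M \<in> possible_wirings I S \<and> Inl h \<notin> \<Union>M}"
    proof
      fix B :: "device set set" assume "B \<in> MH (Inl ` {1..<h}) (Inl ` {h<..I}) j"
      then obtain M where "M \<in> reachable I S I" "Inl h \<notin> \<Union>M" "bb_pairings M = B"
        using sub2[OF h IS] by blast
      then show "B \<in> {bb_pairings M | M. M \<in> possible_wirings I S \<and> Inl h \<notin> \<Union>M}"
        by (auto simp: possible_wirings_def)
    qed
  qed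
  then show ?thesis by (simp add: N_dagger_def)
qed

lemma Ndag_formula:
  assumes h: "1 \<le> h" "h \<le> I" and IS: "I > S" "2 * j = I - S - 1"
  shows "real (N_dagger I S h) = (if I - h \<le> j then (\<Prod>t<I - h. real (h - 1 - t)) * (1 / fact (j - (I - h)))
        * (\<Prod>i<j - (I - h). real ((h - 1 - (I - h) - 2 * i) choose 2)) else 0)"
proof -
  define L :: "device set" where "L = Inl ` {1..<h}"
  define H :: "device set" where "H = Inl ` {h<..I}"
  have c: "card L = h - 1" "card H = I - h"
    by (auto simp: card_image L_def H_def)
  have f: "finite L" "finite H" "L \<inter> H = {}" by (auto simp: L_def H_def)
  have e: "N_dagger I S h = card (MH L H j)" unfolding L_def H_def by (rule Ndag_MH[OF assms])
  show ?thesis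
    unfolding e using card_MH[OF f(2) f(1) f(3), of j] by (simp only: c)
qed

theorem lemma3:
  fixes I S j :: nat
  assumes "I > S" and "odd (I + S)" and "2 * j = I - S - 1" and "j \<ge> 2"
  shows "real (N_dagger I S I) = (1 / fact j) * (\<Prod>k<j. real ((I - 1 - 2 * k) choose 2))
    \<and> real (N_dagger I S (I - 1)) =
           (1 / fact (j - 1)) * real (I - 2) * (\<Prod>k<j - 1. real ((I - 3 - 2 * k) choose 2))
    \<and> (\<forall>h. S + 1 \<le> h \<and> h \<le> I - 2 \<longrightarrow>
         (j < I - h \<longrightarrow> N_dagger I S h = 0)
       \<and> (j = I - h \<longrightarrow>
           real (N_dagger I S h) = (1 / fact (j - (I - h))) * (\<Prod>t=1..I - h. real (h - t)))
       \<and> (j > I - h \<longrightarrow>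
           real (N_dagger I S h) = (1 / fact (j - (I - h))) * (\<Prod>t=1..I - h. real (h - t))
              * (\<Prod>t=1..j - (I - h). real ((2 * h - I - 1 - 2 * (t - 1)) choose 2))))
    \<and> (\<forall>h. 1 \<le> h \<and> h \<le> S \<longrightarrow> N_dagger I S h = 0)"
proof -
  have I5: "I \<ge> 5" using assms by linarith
  have IS: "I > S" "2 * j = I - S - 1" using assms by auto
  have A: "real (N_dagger I S I) = (1 / fact j) * (\<Prod>k<j. real ((I - 1 - 2 * k) choose 2))"
    using Ndag_formula[of I I S j] I5 IS by simp
  have B: "real (N_dagger I S (I - 1)) =
           (1 / fact (j - 1)) * real (I - 2) * (\<Prod>k<j - 1. real ((I - 3 - 2 * k) choose 2))"
  proof -
    have "I - (I - 1) = 1" using I5 by simp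
    moreover have "(\<Prod>t<1. real (I - 1 - 1 - t)) = real (I - 2)" by simp
    moreover have "(\<Prod>i<j - 1. real ((I - 1 - 1 - 1 - 2 * i) choose 2)) = (\<Prod>k<j - 1. real ((I - 3 - 2 * k) choose 2))"
      by (simp add: numeral_3_eq_3)
    ultimately show ?thesis using Ndag_formula[of "I - 1" I S j] I5 IS assms(4) by simp
  qed
  have C: "\<forall>h. S + 1 \<le> h \<and> h \<le> I - 2 \<longrightarrow>
         (j < I - h \<longrightarrow> N_dagger I S h = 0)
       \<and> (j = I - h \<longrightarrow>
           real (N_dagger I S h) = (1 / fact (j - (I - h))) * (\<Prod>t=1..I - h. real (h - t)))
       \<and> (j > I - h \<longrightarrow>
           real (N_dagger I S h) = (1 / fact (j - (I - h))) * (\<Prod>t=1..I - h. real (h - t))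
              * (\<Prod>t=1..j - (I - h). real ((2 * h - I - 1 - 2 * (t - 1)) choose 2)))"
  proof (intro allI impI conjI)
    fix h assume h: "S + 1 \<le> h \<and> h \<le> I - 2"
    have h1: "1 \<le> h" "h \<le> I" using h I5 by auto
    note F = Ndag_formula[OF h1 IS]
    have P1: "(\<Prod>t=1..I - h. real (h - t)) = (\<Prod>t<I - h. real (h - 1 - t))"
      by (subst prod_1_shift) simp
    show "j < I - h \<Longrightarrow> N_dagger I S h = 0" using F by simp
    show "j = I - h \<Longrightarrow> real (N_dagger I S h) = (1 / fact (j - (I - h))) * (\<Prod>t=1..I - h. real (h - t))"
      using F P1 by simp
    assume jm: "j > I - h"
    have hh: "h - 1 - (I - h) = 2 * h - I - 1" using jm IS h1 by arith
    have hh2: "\<And>x. 2 * h - Suc (I + 2 * x) = h - Suc (I - h + 2 * x)" using h1 by arith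
    have P2: "(\<Prod>t=1..j - (I - h). real ((2 * h - I - 1 - 2 * (t - 1)) choose 2)) =
        (\<Prod>i<j - (I - h). real ((h - 1 - (I - h) - 2 * i) choose 2))"
      by (subst prod_1_shift, rule prod.cong[OF refl], rule arg_cong[where f="\<lambda>x. real (x choose 2)"])
         (simp add: hh2)
    show "real (N_dagger I S h) = (1 / fact (j - (I - h))) * (\<Prod>t=1..I - h. real (h - t))
              * (\<Prod>t=1..j - (I - h). real ((2 * h - I - 1 - 2 * (t - 1)) choose 2))"
      using F P1 P2 jm by simp
  qed
  have D: "\<forall>h. 1 \<le> h \<and> h \<le> S \<longrightarrow> N_dagger I S h = 0"
  proof (intro allI impI)
    fix h assume h: "1 \<le> h \<and> h \<le> S"
    then have "\<not> I - h \<le> j" using IS by linarith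
    then show "N_dagger I S h = 0" using Ndag_formula[of h I S j] h IS by simp
  qed
  show ?thesis using A B C D by blast
qed

end
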